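(* In the continuous Donation Game, let $\gamma\in\mathbb{R}$. Suppose there exist a bounded measurable $\psi:[0,K]\to\mathbb{R}$, a probability measure $\sigma_X^0$ on $[0,K]$ and a Markov kernel $\sigma_X[x,y]$ from $[0,K]^2$ to $[0,K]$ such that for all $x,y\in[0,K]$, $$u_Y(x,y)-\gamma=\psi(x)-\lambda\int\psi(s)\,d\sigma_X[x,y](s)-(1-\lambda)\int\psi(s)\,d\sigma_X^0(s).$$ Then $0\le\gamma\le b(K)-c(K)$.
   Context: Continuous Donation Game: fix $K>0$ and measurable nondecreasing functions $b,c:[0,K]\to\mathbb{R}$ with $b(0)=c(0)=0$ and $b(s)>c(s)$ for $s>0$. Action spaces $S_X=S_Y=[0,K]$, payoffs $u_X(x,y)=b(y)-c(x)$, $u_Y(x,y)=b(x)-c(y)$, discount factor $\lambda\in(0,1)$. *)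

theory Defs
  imports "HOL-Probability.Probability"
begin

definition act_space :: "real \<Rightarrow> real measure" where
  "act_space K = restrict_space borel {0..K}"

definition donation_game :: "real \<Rightarrow> (real \<Rightarrow> real) \<Rightarrow> (real \<Rightarrow> real) \<Rightarrow> bool" where
  "donation_game K b c \<longleftrightarrow> K > 0
     \<and> b \<in> borel_measurable (act_space K) \<and> c \<in> borel_measurable (act_space K)
     \<and> mono_on {0..K} b \<and> mono_on {0..K} c
     \<and> b 0 = 0 \<and> c 0 = 0
     \<and> (\<forall>s\<in>{0<..K}. b s > c s)"

definition u_X :: "(real \<Rightarrow> real) \<Rightarrow> (real \<Rightarrow> real) \<Rightarrow> real \<Rightarrow> real \<Rightarrow> real" where
  "u_X b c x y = b y - c x"

definition u_Y :: "(real \<Rightarrow> real) \<Rightarrow> (real \<Rightarrow> real) \<Rightarrow> real \<Rightarrow> real \<Rightarrow> real" where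
  "u_Y b c x y = b x - c y"

end

theory Submission
  imports Defs
begin

lemma int_bounds:
  fixes K :: real and psi :: "real \<Rightarrow> real" and mu :: "real measure"
  assumes K: "0 \<le> K"
    and psi_meas: "psi \<in> borel_measurable (act_space K)"
    and psi_bdd: "bounded (psi ` {0..K})"
    and mu: "mu \<in> space (prob_algebra (act_space K))"
  shows "(\<integral>s. psi s \<partial>mu) \<le> Sup (psi ` {0..K}) \<and> Inf (psi ` {0..K}) \<le> (\<integral>s. psi s \<partial>mu)"
proof -
  have sets: "sets mu = sets (act_space K)" and ps: "prob_space mu"
    using mu by (auto simp: space_prob_algebra)
  have sp: "space mu = {0..K}"
    using sets_eq_imp_space_eq[OF sets] by (simp add: act_space_def space_restrict_space)
  have meas: "psi \<in> borel_measurable mu"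
    using psi_meas measurable_cong_sets[OF sets refl] by blast
  obtain B where B: "\<And>x. x \<in> {0..K} \<Longrightarrow> norm (psi x) \<le> B"
    using psi_bdd unfolding bounded_iff by (metis imageI)
  have ne: "psi ` {0..K} \<noteq> {}" using K by auto
  have bab: "bdd_above (psi ` {0..K})" "bdd_below (psi ` {0..K})"
    using psi_bdd by (auto intro: bounded_imp_bdd_above bounded_imp_bdd_below)
  interpret prob_space mu by fact
  have int: "integrable mu psi"
    by (rule integrable_const_bound[where B=B]) (use B in \<open>auto simp: sp meas intro!: AE_I2\<close>)
  have "(\<integral>s. psi s \<partial>mu) \<le> Sup (psi ` {0..K})"
    by (rule integral_le_const[OF int], rule AE_I2) (auto simp: sp intro: cSup_upper bab)
  moreover have "Inf (psi ` {0..K}) \<le> (\<integral>s. psi s \<partial>mu)"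
    by (rule integral_ge_const[OF int], rule AE_I2) (auto simp: sp intro: cInf_lower bab)
  ultimately show ?thesis by blast
qed

theorem mainTheorem14:
  fixes K lam gamma :: real and b c psi :: "real \<Rightarrow> real"
    and sigma0 :: "real measure" and sigma :: "real \<times> real \<Rightarrow> real measure"
  assumes game: "donation_game K b c"
    and lam: "0 < lam" "lam < 1"
    and psi_meas: "psi \<in> borel_measurable (act_space K)"
    and psi_bdd: "bounded (psi ` {0..K})"
    and sigma0: "sigma0 \<in> space (prob_algebra (act_space K))"
    and sigma_kernel: "sigma \<in> measurable (act_space K \<Otimes>\<^sub>M act_space K) (prob_algebra (act_space K))"
    and eq: "\<And>x y. x \<in> {0..K} \<Longrightarrow> y \<in> {0..K} \<Longrightarrow>
       u_Y b c x y - gamma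
         = psi x - lam * (\<integral>s. psi s \<partial>(sigma (x, y))) - (1 - lam) * (\<integral>s. psi s \<partial>sigma0)"
  shows "0 \<le> gamma \<and> gamma \<le> b K - c K"
proof -
  define M where "M = Sup (psi ` {0..K})"
  define m where "m = Inf (psi ` {0..K})"
  have K: "0 < K" and monob: "mono_on {0..K} b" and b0: "b 0 = 0" and c0: "c 0 = 0"
    using game by (auto simp: donation_game_def)
  have ne: "psi ` {0..K} \<noteq> {}" using K by auto
  have bab: "bdd_above (psi ` {0..K})" "bdd_below (psi ` {0..K})"
    using psi_bdd by (auto intro: bounded_imp_bdd_above bounded_imp_bdd_below)
  have sig: "sigma (x, y) \<in> space (prob_algebra (act_space K))" if "x \<in> {0..K}" "y \<in> {0..K}" for x y
    using measurable_space[OF sigma_kernel, of "(x,y)"] that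
    by (simp add: space_pair_measure act_space_def space_restrict_space)
  have ib: "(\<integral>s. psi s \<partial>mu) \<le> M \<and> m \<le> (\<integral>s. psi s \<partial>mu)"
    if "mu \<in> space (prob_algebra (act_space K))" for mu
    using int_bounds[OF _ psi_meas psi_bdd that] K by (auto simp: M_def m_def)
  define C where "C = (\<integral>s. psi s \<partial>sigma0)"
  have C: "C \<le> M" "m \<le> C" using ib[OF sigma0] by (auto simp: C_def)
  have K0: "K \<in> {0..K}" "0 \<in> {0..K}" using K by auto
  have upper: "gamma \<le> b K - c K"
  proof (rule ccontr)
    assume nt: "\<not> ?thesis"
    define e where "e = gamma - (b K - c K)"
    have e: "e > 0" using nt by (simp add: e_def)
    have "M - e < Sup (psi ` {0..K})" using e by (simp add: M_def)
    then obtain x where x: "x \<in> {0..K}" "M - e < psi x"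
      using less_cSup_iff[OF ne bab(1)] by auto
    define I where "I = (\<integral>s. psi s \<partial>sigma (x, K))"
    have I: "I \<le> M" using ib[OF sig[OF x(1) K0(1)]] by (simp add: I_def)
    have e1: "b x - c K - gamma = psi x - lam * I - (1 - lam) * C"
      using eq[OF x(1) K0(1)] by (simp add: u_Y_def I_def C_def)
    have "lam * I \<le> lam * M" using I lam by (simp add: mult_left_mono)
    moreover have "(1 - lam) * C \<le> (1 - lam) * M" using C lam by (simp add: mult_left_mono)
    ultimately have "b x > b K" using e1 x(2) by (simp add: e_def algebra_simps)
    moreover have "b x \<le> b K" using monob x(1) K0(1) by (auto simp: mono_on_def)
    ultimately show False by simp
  qed
  have lower: "0 \<le> gamma"
  proof (rule ccontr)
    assume nt: "\<not> ?thesis"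
    define e where "e = - gamma"
    have e: "e > 0" using nt by (simp add: e_def)
    have "Inf (psi ` {0..K}) < m + e" using e by (simp add: m_def)
    then obtain x where x: "x \<in> {0..K}" "psi x < m + e"
      using cInf_less_iff[OF ne bab(2)] by auto
    define I where "I = (\<integral>s. psi s \<partial>sigma (x, 0))"
    have I: "m \<le> I" using ib[OF sig[OF x(1) K0(2)]] by (simp add: I_def)
    have e1: "b x - c 0 - gamma = psi x - lam * I - (1 - lam) * C"
      using eq[OF x(1) K0(2)] by (simp add: u_Y_def I_def C_def)
    have "lam * m \<le> lam * I" using I lam by (simp add: mult_left_mono)
    moreover have "(1 - lam) * m \<le> (1 - lam) * C" using C lam by (simp add: mult_left_mono)
    ultimately have "b x < 0" using e1 x(2) c0 by (simp add: e_def algebra_simps)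
    moreover have "b 0 \<le> b x" using monob x(1) K0(2) by (auto simp: mono_on_def)
    ultimately show False using b0 by simp
  qed
  show ?thesis using upper lower by simp
qed

end
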